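(* Let $K\subseteq\mathbb R^d$ be a non-empty compact set which is the closure of its interior. The Fourier transform, considered as a mapping from $(\mathcal M^\infty(\mathbb R^d),\|\cdot\|_K)$ to $\mathcal S'(\mathbb R^d)$ (with the tempered distribution topology), is continuous; that is, if $\mu_n,\mu\in\mathcal M^\infty(\mathbb R^d)$ with $\|\mu_n-\mu\|_K\to0$, then the distributional Fourier transforms $\widehat{\mu_n}$ converge to $\widehat\mu$ in $\mathcal S'(\mathbb R^d)$.
   Context: $\mathcal M^\infty(\mathbb R^d)$ is the space of translation bounded (complex Radon) measures on $\mathbb R^d$, i.e. measures with $\|\mu\|_K:=\sup_{t\in\mathbb R^d}|\mu|(t+K)<\infty$ for all compact $K$, where $|\mu|$ is the total variation; such measures are tempered distributions, and their Fourier transform is taken in the sense of tempered distributions. Convergence in $\mathcal S'(\mathbb R^d)$ means pointwise convergence on every Schwartz function. *)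

theory Defs
  imports "HOL-Analysis.Analysis"
begin

fun dirderivs :: "'a::euclidean_space list \<Rightarrow> ('a \<Rightarrow> complex) \<Rightarrow> ('a \<Rightarrow> complex)" where
  "dirderivs [] f = f"
| "dirderivs (v # vs) f = (\<lambda>x. frechet_derivative (dirderivs vs f) (at x) v)"

definition schwartz :: "('a::euclidean_space \<Rightarrow> complex) \<Rightarrow> bool" where
  "schwartz \<phi> \<longleftrightarrow>
     (\<forall>vs. set vs \<subseteq> Basis \<longrightarrow> (\<forall>x. dirderivs vs \<phi> differentiable at x)) \<and>
     (\<forall>vs (k::nat). set vs \<subseteq> Basis \<longrightarrow>
        (\<exists>C. \<forall>x. norm x ^ k * norm (dirderivs vs \<phi> x) \<le> C))"

definition fourier :: "('a::euclidean_space \<Rightarrow> complex) \<Rightarrow> 'a \<Rightarrow> complex" where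
  "fourier \<phi> \<xi> = integral\<^sup>L lborel (\<lambda>x. cis (- 2 * pi * (x \<bullet> \<xi>)) * \<phi> x)"

text \<open>A complex Radon measure is represented as
  \<open>\<mu> = (\<mu>\<^sub>1 - \<mu>\<^sub>2) + i (\<mu>\<^sub>3 - \<mu>\<^sub>4)\<close> with four positive Borel measures.\<close>
record 'a cmeasure =
  cm_rp :: "'a measure"
  cm_rn :: "'a measure"
  cm_ip :: "'a measure"
  cm_in :: "'a measure"

definition translation_bounded_pos :: "'a::euclidean_space measure \<Rightarrow> bool" where
  "translation_bounded_pos M \<longleftrightarrow> sets M = sets borel \<and>
     (\<forall>K. compact K \<longrightarrow> (SUP t. emeasure M ((+) t ` K)) < \<infinity>)"

text \<open>Membership in \<open>\<M>\<^sup>\<infinity>\<close>: each of the four positive parts is a translation bounded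
  Borel measure (every translation bounded complex Radon measure admits such a
  representation, e.g. via the Jordan decompositions of its real and imaginary parts).\<close>
definition Minf :: "'a::euclidean_space cmeasure \<Rightarrow> bool" where
  "Minf \<mu> \<longleftrightarrow> translation_bounded_pos (cm_rp \<mu>) \<and> translation_bounded_pos (cm_rn \<mu>) \<and>
              translation_bounded_pos (cm_ip \<mu>) \<and> translation_bounded_pos (cm_in \<mu>)"

definition cm_val :: "'a cmeasure \<Rightarrow> 'a set \<Rightarrow> complex" where
  "cm_val \<mu> A = complex_of_real (measure (cm_rp \<mu>) A - measure (cm_rn \<mu>) A)
               + \<i> * complex_of_real (measure (cm_ip \<mu>) A - measure (cm_in \<mu>) A)"

definition total_variation :: "('a::euclidean_space set \<Rightarrow> complex) \<Rightarrow> 'a set \<Rightarrow> ennreal" where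
  "total_variation \<nu> A = (SUP P \<in> {P. finite P \<and> P \<subseteq> sets borel \<and> disjoint P \<and> \<Union>P = A}.
                            ennreal (\<Sum>B\<in>P. cmod (\<nu> B)))"

definition K_norm :: "'a::euclidean_space set \<Rightarrow> ('a set \<Rightarrow> complex) \<Rightarrow> ennreal" where
  "K_norm K \<nu> = (SUP t. total_variation \<nu> ((+) t ` K))"

definition cm_integral :: "'a cmeasure \<Rightarrow> ('a \<Rightarrow> complex) \<Rightarrow> complex" where
  "cm_integral \<mu> f = (integral\<^sup>L (cm_rp \<mu>) f - integral\<^sup>L (cm_rn \<mu>) f)
                   + \<i> * (integral\<^sup>L (cm_ip \<mu>) f - integral\<^sup>L (cm_in \<mu>) f)"

text \<open>Distributional Fourier transform: \<open>\<langle>\<hat>\<mu>, \<phi>\<rangle> = \<langle>\<mu>, \<hat>\<phi>\<rangle>\<close>.\<close>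
definition ft_pair :: "'a::euclidean_space cmeasure \<Rightarrow> ('a \<Rightarrow> complex) \<Rightarrow> complex" where
  "ft_pair \<mu> \<phi> = cm_integral \<mu> (fourier \<phi>)"

end

theory Submission
  imports Defs
begin
lemma dirderivs_append: "dirderivs ws (dirderivs vs \<phi>) = dirderivs (ws @ vs) \<phi>"
  by (induction ws) auto

lemma schwartz_dirderivs:
  assumes "schwartz \<phi>" "set vs \<subseteq> Basis"
  shows "schwartz (dirderivs vs \<phi>)"
  using assms unfolding schwartz_def dirderivs_append by auto

lemma schwartz_differentiable:
  assumes "schwartz \<phi>" shows "\<phi> differentiable at x"
  using assms unfolding schwartz_def by (metis dirderivs.simps(1) empty_set empty_subsetI)

lemma schwartz_cont: assumes "schwartz \<phi>" shows "continuous_on UNIV \<phi>"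
  by (meson assms continuous_at_imp_continuous_on differentiable_imp_continuous_within schwartz_differentiable)

lemma schwartz_meas: assumes "schwartz \<phi>" shows "\<phi> \<in> borel_measurable borel"
  by (rule borel_measurable_continuous_onI[OF schwartz_cont[OF assms]])

lemma pow_bound: fixes t :: real assumes "t \<ge> 0" shows "(1 + t) ^ N \<le> 2 ^ N * (1 + t ^ N)"
proof (cases "t \<le> 1")
  case True
  have "(1 + t) ^ N \<le> 2 ^ N" using True assms by (intro power_mono) auto
  also have "\<dots> \<le> 2 ^ N * (1 + t ^ N)" using assms by simp
  finally show ?thesis .
next
  case False
  have "(1 + t) ^ N \<le> (2 * t) ^ N" using False assms by (intro power_mono) auto
  also have "\<dots> \<le> 2 ^ N * (1 + t ^ N)" using assms by (simp add: power_mult_distrib)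
  finally show ?thesis .
qed

lemma schwartz_decay:
  assumes "schwartz \<phi>" shows "\<exists>A. \<forall>x. (1 + norm x) ^ N * norm (\<phi> x) \<le> A"
proof -
  from assms obtain C0 where C0: "\<And>x. norm x ^ 0 * norm (dirderivs [] \<phi> x) \<le> C0"
    unfolding schwartz_def by (metis empty_set empty_subsetI)
  from assms obtain CN where CN: "\<And>x. norm x ^ N * norm (dirderivs [] \<phi> x) \<le> CN"
    unfolding schwartz_def by (metis empty_set empty_subsetI)
  show ?thesis
  proof (intro exI allI)
    fix x
    have "(1 + norm x) ^ N * norm (\<phi> x) \<le> 2 ^ N * (1 + norm x ^ N) * norm (\<phi> x)"
      by (intro mult_right_mono pow_bound) auto
    also have "\<dots> = 2 ^ N * (norm (\<phi> x) + norm x ^ N * norm (\<phi> x))" by (simp add: algebra_simps)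
    also have "\<dots> \<le> 2 ^ N * (C0 + CN)" using C0[of x] CN[of x] by (intro mult_left_mono add_mono) auto
    finally show "(1 + norm x) ^ N * norm (\<phi> x) \<le> 2 ^ N * (C0 + CN)" .
  qed
qed

definition wt :: "nat \<Rightarrow> 'a::real_normed_vector \<Rightarrow> real" where
  "wt N x = inverse ((1 + norm x) ^ N)"

lemma wt_pos: "wt N x > 0" unfolding wt_def
  by (metis add_pos_nonneg inverse_positive_iff_positive norm_ge_zero zero_less_one zero_less_power)

lemma wt_meas[measurable]: "wt N \<in> borel_measurable borel"
  unfolding wt_def by measurable

lemma decay_wt: assumes "\<forall>x. (1 + norm x) ^ N * norm (f x) \<le> A" shows "norm (f x) \<le> A * wt N x"
proof -
  have p: "(1 + norm x) ^ N > 0" "1 + norm x > 0" by (simp_all add: add_pos_nonneg)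
  have "norm (f x) = ((1 + norm x) ^ N * norm (f x)) * wt N x" using p unfolding wt_def by (simp add: field_simps)
  also have "\<dots> \<le> A * wt N x" using assms wt_pos[of N x] by (intro mult_right_mono) (auto intro: less_imp_le)
  finally show ?thesis .
qed

lemma wt_shift: fixes x y :: "'a::real_normed_vector"
  assumes "norm (x - y) \<le> r" "r \<ge> 0"
  shows "wt N x \<le> (1 + r) ^ N * wt N y"
proof -
  have "norm y \<le> norm x + r"
    using assms norm_triangle_ineq2[of y x] norm_minus_commute[of x y] by linarith
  moreover have "0 \<le> r * norm x" using assms(2) by simp
  ultimately have "1 + norm y \<le> (1 + r) * (1 + norm x)"
    by (simp add: algebra_simps)
  then have "(1 + norm y) ^ N \<le> ((1 + r) * (1 + norm x)) ^ N"
    by (intro power_mono) auto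
  then have "(1 + norm y) ^ N \<le> (1 + r) ^ N * (1 + norm x) ^ N" by (simp add: power_mult_distrib)
  moreover have "(1 + norm x) ^ N > 0" "(1 + norm y) ^ N > 0" by (simp_all add: add_pos_nonneg)
  ultimately show ?thesis unfolding wt_def
    by (simp add: field_simps)
qed

lemma wt_integrable: "integrable lborel (wt (DIM('a)+2) :: 'a::euclidean_space \<Rightarrow> real)"
proof -
  define N where "N = DIM('a) + 2"
  define c where "c = unit_ball_vol (real DIM('a))"
  define a where "a k = inverse ((1 + real k) ^ N)" for k :: nat
  have cpos: "c > 0" unfolding c_def by (rule unit_ball_vol_pos) simp
  have pt: "ennreal (norm (wt N x)) \<le> (\<Sum>k. ennreal (a k) * indicator (cball (0::'a) (real k + 1)) x)" for x :: 'a
  proof -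
    define k where "k = nat \<lfloor>norm x\<rfloor>"
    have fl: "0 \<le> \<lfloor>norm x\<rfloor>" by simp
    have kk: "real k = real_of_int \<lfloor>norm x\<rfloor>" unfolding k_def using fl by simp
    have k1: "real k \<le> norm x" unfolding kk by simp
    have k2: "norm x \<le> real k + 1" unfolding kk by linarith
    have "wt N x \<le> a k" unfolding wt_def a_def
      using k1 by (intro le_imp_inverse_le power_mono) (auto simp: add_pos_nonneg)
    then have "ennreal (norm (wt N x)) \<le> ennreal (a k) * indicator (cball (0::'a) (real k + 1)) x"
      using k2 wt_pos[of N x] by (auto simp: indicator_def)
    also have "\<dots> \<le> (\<Sum>k. ennreal (a k) * indicator (cball (0::'a) (real k + 1)) x)"
    proof -
      define F where "F j = ennreal (a j) * indicator (cball (0::'a) (real j + 1)) x" for j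
      have "F k \<le> suminf F" using sum_le_suminf[of F "{k}"] by simp
      then show ?thesis unfolding F_def .
    qed
    finally show ?thesis .
  qed
  have "(\<integral>\<^sup>+x. ennreal (norm (wt N x)) \<partial>(lborel::'a measure))
      \<le> (\<integral>\<^sup>+x. (\<Sum>k. ennreal (a k) * indicator (cball (0::'a) (real k + 1)) x) \<partial>lborel)"
    by (intro nn_integral_mono pt)
  also have "\<dots> = (\<Sum>k. (\<integral>\<^sup>+x. ennreal (a k) * indicator (cball (0::'a) (real k + 1)) x \<partial>lborel))"
    by (intro nn_integral_suminf) (auto intro!: borel_measurable_times_ennreal borel_measurable_indicator)
  also have "\<dots> = (\<Sum>k. ennreal (a k) * emeasure lborel (cball (0::'a) (real k + 1)))"
    by (simp add: nn_integral_cmult_indicator)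
  also have "\<dots> = (\<Sum>k. ennreal (c * inverse ((1 + real k) ^ 2)))"
  proof (intro suminf_cong)
    fix k
    have e: "emeasure lborel (cball (0::'a) (real k + 1)) = ennreal (c * (real k + 1) ^ DIM('a))"
      unfolding c_def by (rule emeasure_cball) simp
    have "a k * (c * (real k + 1) ^ DIM('a)) = c * inverse ((1 + real k) ^ 2)"
    proof -
      have p: "(1 + real k) ^ N = (1 + real k) ^ DIM('a) * (1 + real k) ^ 2" unfolding N_def by (rule power_add)
      have nz: "(1 + real k) ^ DIM('a) \<noteq> 0" "(1 + real k) ^ 2 \<noteq> 0" by (simp_all add: add_pos_nonneg)
      show ?thesis unfolding a_def p using nz by (simp add: inverse_mult_distrib add.commute)
    qed
    then show "ennreal (a k) * emeasure lborel (cball (0::'a) (real k + 1)) = ennreal (c * inverse ((1 + real k) ^ 2))"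
      unfolding e using cpos by (simp add: ennreal_mult'[symmetric] a_def)
  qed
  also have "\<dots> = ennreal (\<Sum>k. c * inverse ((1 + real k) ^ 2))"
  proof (rule suminf_ennreal2)
    show "summable (\<lambda>k. c * inverse ((1 + real k) ^ 2))"
      apply (intro summable_mult)
      using summable_Suc_iff[of "\<lambda>n. inverse (real n ^ 2)"] inverse_power_summable[of 2, where 'a=real]
      by (simp add: add.commute)
  qed (use cpos in auto)
  also have "\<dots> < \<infinity>" by simp
  finally show ?thesis unfolding N_def[symmetric] by (intro integrableI_bounded) auto
qed

lemma lborel_integral_shift:
  fixes c :: "'a::euclidean_space" and f :: "'a \<Rightarrow> 'b::{banach,second_countable_topology}"
  assumes "f \<in> borel_measurable borel"
  shows "(\<integral>x. f (c + x) \<partial>lborel) = integral\<^sup>L lborel f"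
proof -
  have "integral\<^sup>L lborel f = integral\<^sup>L (distr lborel borel ((+) c)) f" by (simp add: lborel_distr_plus)
  also have "\<dots> = (\<integral>x. f (c + x) \<partial>lborel)" using assms by (intro integral_distr) auto
  finally show ?thesis ..
qed

lemma lborel_integrable_shift:
  fixes c :: "'a::euclidean_space" and f :: "'a \<Rightarrow> 'b::{banach,second_countable_topology}"
  assumes "integrable lborel f"
  shows "integrable lborel (\<lambda>x. f (c + x))"
proof -
  have m: "f \<in> borel_measurable borel" using assms by auto
  have "integrable (distr lborel borel ((+) c)) f" by (simp add: lborel_distr_plus assms)
  then show ?thesis using m by (subst (asm) integrable_distr_eq) auto
qed

lemma integrable_wt_bound:
  fixes f :: "'a::euclidean_space \<Rightarrow> 'b::{banach,second_countable_topology}"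
  assumes "f \<in> borel_measurable borel" "\<And>x. norm (f x) \<le> A * wt (DIM('a)+2) x"
  shows "integrable lborel f"
proof (rule Bochner_Integration.integrable_bound[OF integrable_mult_right[OF wt_integrable, of A]])
  show "f \<in> borel_measurable lborel" using assms by simp
  show "AE x in lborel. norm (f x) \<le> norm (A * wt (DIM('a) + 2) x)"
    using assms(2) by (auto intro: order_trans[OF _ abs_ge_self])
qed

lemma schwartz_integrable_mult:
  fixes \<phi> :: "'a::euclidean_space \<Rightarrow> complex"
  assumes "schwartz \<phi>" "g \<in> borel_measurable borel" "\<And>x. norm (g x) \<le> 1"
  shows "integrable lborel (\<lambda>x. g x * \<phi> x)"
proof -
  obtain A where A: "\<forall>x. (1 + norm x) ^ (DIM('a)+2) * norm (\<phi> x) \<le> A"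
    using schwartz_decay[OF assms(1)] by blast
  have m: "\<phi> \<in> borel_measurable borel" by (rule schwartz_meas[OF assms(1)])
  show ?thesis
  proof (rule integrable_wt_bound)
    show "(\<lambda>x. g x * \<phi> x) \<in> borel_measurable borel" using m assms(2) by measurable
    fix x
    have "norm (g x * \<phi> x) \<le> 1 * norm (\<phi> x)" unfolding norm_mult
      using assms(3)[of x] by (intro mult_right_mono) auto
    also have "\<dots> \<le> A * wt (DIM('a)+2) x" using decay_wt[OF A] by simp
    finally show "norm (g x * \<phi> x) \<le> A * wt (DIM('a)+2) x" .
  qed
qed

lemma cis_kernel_meas: "(\<lambda>x::'a::euclidean_space. cis (- 2 * pi * (x \<bullet> \<xi>))) \<in> borel_measurable borel"
  by (intro borel_measurable_continuous_onI continuous_intros)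

lemma fourier_integrable:
  fixes \<phi> :: "'a::euclidean_space \<Rightarrow> complex"
  assumes "schwartz \<phi>"
  shows "integrable lborel (\<lambda>x. cis (- 2 * pi * (x \<bullet> \<xi>)) * \<phi> x)"
  by (rule schwartz_integrable_mult[OF assms cis_kernel_meas]) simp

lemma fourier_norm_bound:
  fixes \<phi> :: "'a::euclidean_space \<Rightarrow> complex"
  shows "norm (fourier \<phi> \<xi>) \<le> (\<integral>x. norm (\<phi> x) \<partial>lborel)"
  unfolding fourier_def using integral_norm_bound[of lborel "\<lambda>x. cis (- 2 * pi * (x \<bullet> \<xi>)) * \<phi> x"]
  by (simp add: norm_mult)

lemma dq_limit:
  fixes g :: "real \<Rightarrow> 'b::real_normed_vector"
  assumes "(g has_vector_derivative v) (at 0)"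
  shows "(\<lambda>k. (g (inverse (real (Suc k))) - g 0) /\<^sub>R inverse (real (Suc k))) \<longlonglongrightarrow> v"
proof -
  have "((\<lambda>h. norm (g (0 + h) - g 0 - h *\<^sub>R v) / norm h) \<longlongrightarrow> 0) (at 0)"
    using assms unfolding has_vector_derivative_def has_derivative_at by blast
  moreover have "filterlim (\<lambda>k. inverse (real (Suc k))) (at (0::real)) sequentially"
    by (intro filterlim_atI LIMSEQ_inverse_real_of_nat) auto
  ultimately have "(\<lambda>k. norm (g (0 + inverse (real (Suc k))) - g 0 - inverse (real (Suc k)) *\<^sub>R v) / norm (inverse (real (Suc k)))) \<longlonglongrightarrow> 0"
    by (rule filterlim_compose)
  moreover have "norm (g (0 + inverse (real (Suc k))) - g 0 - inverse (real (Suc k)) *\<^sub>R v) / norm (inverse (real (Suc k)))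
     = norm ((g (inverse (real (Suc k))) - g 0) /\<^sub>R inverse (real (Suc k)) - v)" for k
  proof -
    let ?h = "inverse (real (Suc k))"
    have hp: "?h > 0" by simp
    have "(g ?h - g 0) /\<^sub>R ?h - v = (g ?h - g 0 - ?h *\<^sub>R v) /\<^sub>R ?h"
      using hp by (simp add: scaleR_diff_right)
    moreover have "norm ((g ?h - g 0 - ?h *\<^sub>R v) /\<^sub>R ?h) = norm (g ?h - g 0 - ?h *\<^sub>R v) / norm ?h"
      by (simp only: norm_scaleR divide_inverse mult.commute abs_inverse real_norm_def)
    ultimately show ?thesis by simp
  qed
  ultimately have "(\<lambda>k. norm ((g (inverse (real (Suc k))) - g 0) /\<^sub>R inverse (real (Suc k)) - v)) \<longlonglongrightarrow> 0"
    by simp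
  then show ?thesis by (simp add: tendsto_norm_zero_iff LIM_zero_iff)
qed

lemma line_deriv:
  fixes \<phi> :: "'a::euclidean_space \<Rightarrow> complex"
  assumes "(\<phi> has_derivative D) (at (x + s *\<^sub>R b))"
  shows "((\<lambda>s. \<phi> (x + s *\<^sub>R b)) has_derivative (\<lambda>u. u *\<^sub>R D b)) (at s within S)"
proof -
  have l: "((\<lambda>s. x + s *\<^sub>R b) has_derivative (\<lambda>u. u *\<^sub>R b)) (at s within S)"
    by (auto intro!: derivative_eq_intros)
  have bl: "bounded_linear D" using assms by (rule has_derivative_bounded_linear)
  from has_derivative_compose[OF l assms] show ?thesis
    using linear_simps(5)[OF bl] by simp
qed

lemma fourier_deriv1:
  fixes \<phi> :: "'a::euclidean_space \<Rightarrow> complex"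
  assumes s\<phi>: "schwartz \<phi>" and b: "b \<in> Basis"
  shows "fourier (dirderivs [b] \<phi>) \<xi> = (\<i> * of_real (2 * pi * (b \<bullet> \<xi>))) * fourier \<phi> \<xi>"
proof -
  define N where "N = DIM('a) + 2"
  define e where "e x = cis (- 2 * pi * (x \<bullet> \<xi>))" for x :: 'a
  define \<beta> where "\<beta> = b \<bullet> \<xi>"
  define D where "D x = frechet_derivative \<phi> (at x)" for x
  have hasD: "(\<phi> has_derivative D x) (at x)" for x
    unfolding D_def using frechet_derivative_works schwartz_differentiable[OF s\<phi>] by blast
  define \<psi> where "\<psi> = dirderivs [b] \<phi>"
  have \<psi>_eq: "\<psi> x = D x b" for x by (simp add: \<psi>_def D_def)
  have s\<psi>: "schwartz \<psi>" unfolding \<psi>_def using s\<phi> b by (intro schwartz_dirderivs) auto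
  define h where "h k = inverse (real (Suc k))" for k
  have hpos: "0 < h k" "h k \<le> 1" for k unfolding h_def by (auto simp: field_simps)
  define Q where "Q k x = ((\<phi> (x + h k *\<^sub>R b) - \<phi> x) /\<^sub>R h k) * e x" for k x
  have m\<phi>[measurable]: "\<phi> \<in> borel_measurable borel" by (rule schwartz_meas[OF s\<phi>])
  have m\<psi>[measurable]: "\<psi> \<in> borel_measurable borel" by (rule schwartz_meas[OF s\<psi>])
  have me[measurable]: "e \<in> borel_measurable borel" unfolding e_def by (rule cis_kernel_meas)
  have ne: "norm (e x) = 1" for x by (simp add: e_def)
  have int\<phi>: "integrable lborel (\<lambda>x. e x * \<phi> x)" unfolding e_def by (rule fourier_integrable[OF s\<phi>])
  have int\<psi>: "integrable lborel (\<lambda>x. e x * \<psi> x)" unfolding e_def by (rule fourier_integrable[OF s\<psi>])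
  define F where "F = fourier \<phi> \<xi>"
  have F_eq: "F = (\<integral>x. e x * \<phi> x \<partial>lborel)" unfolding F_def fourier_def e_def ..

  have Qint_eq: "integral\<^sup>L lborel (Q k) = ((cis (2 * pi * \<beta> * h k) - 1) /\<^sub>R h k) * F" for k
  proof -
    define c where "c = h k *\<^sub>R b"
    define G where "G y = \<phi> y * e (y - c)" for y
    have Gm[measurable]: "G \<in> borel_measurable borel" unfolding G_def by measurable
    have G_eq: "G y = cis (2 * pi * \<beta> * h k) * (e y * \<phi> y)" for y
    proof -
      have "(y - c) \<bullet> \<xi> = y \<bullet> \<xi> - h k * \<beta>" by (simp add: c_def \<beta>_def inner_diff_left)
      then have "e (y - c) = cis (- 2 * pi * (y \<bullet> \<xi> - h k * \<beta>))"
        unfolding e_def by simp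
      also have "\<dots> = cis (- 2 * pi * (y \<bullet> \<xi>)) * cis (2 * pi * \<beta> * h k)"
        unfolding cis_mult by (rule arg_cong[where f=cis]) (simp add: algebra_simps)
      finally have "e (y - c) = cis (- 2 * pi * (y \<bullet> \<xi>)) * cis (2 * pi * \<beta> * h k)" .
      then show ?thesis unfolding G_def e_def by (simp add: algebra_simps)
    qed
    have shift: "(\<lambda>x. G (c + x)) = (\<lambda>x. e x * \<phi> (x + c))"
      by (rule ext) (simp add: G_def add.commute mult.commute)
    have intG: "integrable lborel G" unfolding G_eq by (intro integrable_mult_right int\<phi>)
    have intS: "integrable lborel (\<lambda>x. e x * \<phi> (x + c))"
      using lborel_integrable_shift[OF intG, of c] unfolding shift .
    have I1: "(\<integral>x. e x * \<phi> (x + c) \<partial>lborel) = cis (2 * pi * \<beta> * h k) * F"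
    proof -
      have "(\<integral>x. e x * \<phi> (x + c) \<partial>lborel) = (\<integral>x. G (c + x) \<partial>lborel)" unfolding shift ..
      also have "\<dots> = integral\<^sup>L lborel G" by (rule lborel_integral_shift) simp
      also have "\<dots> = cis (2 * pi * \<beta> * h k) * F" unfolding G_eq F_eq by simp
      finally show ?thesis .
    qed
    have Qe: "Q k x = (e x * \<phi> (x + c) - e x * \<phi> x) /\<^sub>R h k" for x
      unfolding Q_def c_def by (simp add: scaleR_conv_of_real algebra_simps)
    have "integral\<^sup>L lborel (Q k) = (\<integral>x. e x * \<phi> (x + c) - e x * \<phi> x \<partial>lborel) /\<^sub>R h k"
      unfolding Qe by simp
    also have "\<dots> = (cis (2 * pi * \<beta> * h k) * F - F) /\<^sub>R h k"
      using intS int\<phi> by (simp add: I1 F_eq)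
    also have "\<dots> = ((cis (2 * pi * \<beta> * h k) - 1) /\<^sub>R h k) * F"
      by (simp add: scaleR_conv_of_real algebra_simps)
    finally show ?thesis .
  qed

  obtain A\<psi> where A\<psi>: "\<forall>y. (1 + norm y) ^ N * norm (\<psi> y) \<le> A\<psi>"
    using schwartz_decay[OF s\<psi>] by blast
  have A\<psi>0: "0 \<le> A\<psi>" using A\<psi> by (meson order_trans mult_nonneg_nonneg norm_ge_zero zero_le_power add_nonneg_nonneg zero_le_one)
  have \<psi>b: "norm (\<psi> y) \<le> A\<psi> * wt N y" for y using decay_wt[OF A\<psi>] .

  have bound: "norm (Q k x) \<le> A\<psi> * 2 ^ N * wt N x" for k x
  proof -
    let ?H = "h k"
    define g where "g s = \<phi> (x + s *\<^sub>R b)" for s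
    have gd: "(g has_derivative (\<lambda>u. u *\<^sub>R \<psi> (x + s *\<^sub>R b))) (at s within {0..?H})" for s
      unfolding g_def \<psi>_eq by (rule line_deriv[OF hasD])
    have on: "onorm (\<lambda>u. u *\<^sub>R \<psi> (x + s *\<^sub>R b)) \<le> A\<psi> * 2 ^ N * wt N x" if "s \<in> {0..?H}" for s
    proof -
      have "onorm (\<lambda>u::real. u *\<^sub>R \<psi> (x + s *\<^sub>R b)) = onorm (\<lambda>u::real. u) * norm (\<psi> (x + s *\<^sub>R b))"
        by (rule onorm_scaleR_left) (rule bounded_linear_ident)
      also have "\<dots> = norm (\<psi> (x + s *\<^sub>R b))" by (simp add: onorm_id)
      also have "\<dots> \<le> A\<psi> * wt N (x + s *\<^sub>R b)" by (rule \<psi>b)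
      also have "\<dots> \<le> A\<psi> * ((1 + 1) ^ N * wt N x)"
      proof (intro mult_left_mono wt_shift A\<psi>0)
        show "norm (x + s *\<^sub>R b - x) \<le> 1" using that hpos[of k] b by auto
      qed simp
      finally show ?thesis by (simp add: algebra_simps)
    qed
    have "norm (g ?H - g 0) \<le> A\<psi> * 2 ^ N * wt N x * norm (?H - 0)"
      by (rule differentiable_bound[OF convex_real_interval(5) gd on]) (use hpos[of k] in auto)
    moreover have "norm ((g ?H - g 0) /\<^sub>R ?H) = norm (g ?H - g 0) / ?H"
      using hpos[of k] by (simp add: abs_of_pos divide_inverse mult.commute)
    ultimately have "norm ((g ?H - g 0) /\<^sub>R ?H) \<le> A\<psi> * 2 ^ N * wt N x"
      using hpos[of k] by (simp add: pos_divide_le_eq)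
    then show ?thesis unfolding Q_def g_def norm_mult ne by simp
  qed

  have LHS: "(\<lambda>k. integral\<^sup>L lborel (Q k)) \<longlonglongrightarrow> (\<integral>x. e x * \<psi> x \<partial>lborel)"
  proof (rule integral_dominated_convergence[where w="\<lambda>x::'a. A\<psi> * 2 ^ N * wt N x"])
    show "(\<lambda>x. e x * \<psi> x) \<in> borel_measurable lborel" by simp
    show "Q k \<in> borel_measurable lborel" for k unfolding Q_def by simp
    show "integrable lborel (\<lambda>x::'a. A\<psi> * 2 ^ N * wt N x)"
      unfolding N_def by (rule integrable_mult_right) (rule wt_integrable)
    show "AE x in lborel. norm (Q k x) \<le> A\<psi> * 2 ^ N * wt N x" for k using bound by simp
    show "AE x in lborel. (\<lambda>k. Q k x) \<longlonglongrightarrow> e x * \<psi> x"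
    proof (intro AE_I2)
      fix x
      define g where "g s = \<phi> (x + s *\<^sub>R b)" for s
      have "(g has_derivative (\<lambda>u. u *\<^sub>R D x b)) (at 0 within UNIV)"
        unfolding g_def by (rule line_deriv) (simp add: hasD)
      then have "(g has_vector_derivative D x b) (at 0)" by (simp add: has_vector_derivative_def)
      from dq_limit[OF this] have "(\<lambda>k. (g (h k) - g 0) /\<^sub>R h k) \<longlonglongrightarrow> \<psi> x"
        unfolding h_def \<psi>_eq .
      then have "(\<lambda>k. ((g (h k) - g 0) /\<^sub>R h k) * e x) \<longlonglongrightarrow> \<psi> x * e x"
        by (intro tendsto_mult_right)
      then show "(\<lambda>k. Q k x) \<longlonglongrightarrow> e x * \<psi> x" unfolding Q_def g_def by (simp add: mult.commute)
    qed
  qed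

  have RHS: "(\<lambda>k. ((cis (2 * pi * \<beta> * h k) - 1) /\<^sub>R h k) * F) \<longlonglongrightarrow> (\<i> * of_real (2 * pi * \<beta>)) * F"
  proof (intro tendsto_mult_right)
    define c where "c = \<i> * complex_of_real (2 * pi * \<beta>)"
    define f where "f z = exp (c * z)" for z
    have "(f has_field_derivative (exp (c * 0) * c)) (at (of_real 0))"
      unfolding f_def by (auto intro!: derivative_eq_intros)
    then have "((\<lambda>s. f (of_real s)) has_vector_derivative c) (at 0)"
      using has_vector_derivative_real_field by fastforce
    moreover have "f (of_real s) = cis (2 * pi * \<beta> * s)" for s
      unfolding f_def c_def cis_conv_exp by (simp add: algebra_simps)
    ultimately have "((\<lambda>s. cis (2 * pi * \<beta> * s)) has_vector_derivative c) (at 0)" by simp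
    from dq_limit[OF this] show "(\<lambda>k. (cis (2 * pi * \<beta> * h k) - 1) /\<^sub>R h k) \<longlonglongrightarrow> \<i> * of_real (2 * pi * \<beta>)"
      unfolding h_def c_def by simp
  qed
  have "(\<integral>x. e x * \<psi> x \<partial>lborel) = (\<i> * of_real (2 * pi * \<beta>)) * F"
    using LHS RHS unfolding Qint_eq by (rule LIMSEQ_unique)
  then show ?thesis unfolding \<psi>_def[symmetric] F_def \<beta>_def fourier_def e_def .
qed

lemma fourier_iter:
  fixes \<phi> :: "'a::euclidean_space \<Rightarrow> complex"
  assumes "schwartz \<phi>" "b \<in> Basis"
  shows "fourier (dirderivs (replicate m b) \<phi>) \<xi> = (\<i> * of_real (2 * pi * (b \<bullet> \<xi>))) ^ m * fourier \<phi> \<xi>"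
proof (induction m)
  case 0 then show ?case by simp
next
  case (Suc m)
  have eq: "dirderivs (replicate (Suc m) b) \<phi> = dirderivs [b] (dirderivs (replicate m b) \<phi>)" by simp
  have s: "schwartz (dirderivs (replicate m b) \<phi>)" using assms by (intro schwartz_dirderivs) auto
  show ?case unfolding eq fourier_deriv1[OF s assms(2)] Suc by simp
qed

lemma exists_big_coord:
  fixes \<xi> :: "'a::euclidean_space"
  shows "\<exists>b\<in>Basis. norm \<xi> \<le> real DIM('a) * \<bar>\<xi> \<bullet> b\<bar>"
proof -
  define m where "m = Max ((\<lambda>b. \<bar>\<xi> \<bullet> b\<bar>) ` (Basis::'a set))"
  have "m \<in> (\<lambda>b. \<bar>\<xi> \<bullet> b\<bar>) ` (Basis::'a set)" unfolding m_def by (intro Max_in) auto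
  then obtain b where b: "b \<in> Basis" "m = \<bar>\<xi> \<bullet> b\<bar>" by auto
  have "norm \<xi> \<le> (\<Sum>b\<in>Basis. \<bar>\<xi> \<bullet> b\<bar>)" by (rule norm_le_l1)
  also have "\<dots> \<le> of_nat (card (Basis::'a set)) * m"
    by (intro sum_bounded_above) (auto simp: m_def)
  finally show ?thesis using b by auto
qed

lemma fourier_decay:
  fixes \<phi> :: "'a::euclidean_space \<Rightarrow> complex"
  assumes s\<phi>: "schwartz \<phi>"
  shows "\<exists>A. \<forall>\<xi>. (1 + norm \<xi>) ^ N * norm (fourier \<phi> \<xi>) \<le> A"
proof -
  define L where "L v = (\<integral>x. norm (dirderivs v \<phi> x) \<partial>lborel)" for v
  have L0: "L v \<ge> 0" for v unfolding L_def by (rule integral_nonneg_AE) simp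
  define D where "D = real DIM('a)"
  have D1: "D \<ge> 1" unfolding D_def by simp
  define S where "S = (\<Sum>b\<in>Basis. L (replicate N b))"
  have Fb: "norm (fourier (dirderivs v \<phi>) \<xi>) \<le> L v" for v \<xi>
    unfolding L_def by (rule fourier_norm_bound)
  show ?thesis
  proof (intro exI allI)
    fix \<xi> :: 'a
    obtain b where b: "b \<in> Basis" "norm \<xi> \<le> D * \<bar>\<xi> \<bullet> b\<bar>"
      using exists_big_coord[of \<xi>] unfolding D_def by blast
    define \<beta> where "\<beta> = \<bar>\<xi> \<bullet> b\<bar>"
    have \<beta>0: "\<beta> \<ge> 0" unfolding \<beta>_def by simp
    define F where "F = norm (fourier \<phi> \<xi>)"
    have F0: "F \<ge> 0" unfolding F_def by simp
    have FL: "F \<le> L []" unfolding F_def using Fb[of "[]" \<xi>] by simp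
    have "(2 * pi) ^ N * (\<beta> ^ N * F) = norm (fourier (dirderivs (replicate N b) \<phi>) \<xi>)"
      unfolding fourier_iter[OF s\<phi> b(1)] F_def \<beta>_def
      by (simp add: norm_mult norm_power power_mult_distrib inner_commute)
    also have "\<dots> \<le> L (replicate N b)" by (rule Fb)
    also have "\<dots> \<le> S" unfolding S_def using b(1) L0
      by (intro member_le_sum) auto
    finally have bF: "\<beta> ^ N * F \<le> S / (2 * pi) ^ N"
      by (simp add: field_simps mult.commute)
    have "1 + norm \<xi> \<le> D * (1 + \<beta>)" using b(2) D1 unfolding \<beta>_def by (simp add: algebra_simps)
    then have "(1 + norm \<xi>) ^ N \<le> (D * (1 + \<beta>)) ^ N" by (intro power_mono) auto
    also have "\<dots> = D ^ N * (1 + \<beta>) ^ N" by (simp add: power_mult_distrib)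
    also have "\<dots> \<le> D ^ N * (2 ^ N * (1 + \<beta> ^ N))"
      using D1 \<beta>0 by (intro mult_left_mono pow_bound) auto
    finally have p: "(1 + norm \<xi>) ^ N \<le> (2 * D) ^ N * (1 + \<beta> ^ N)" by (simp add: power_mult_distrib mult_ac)
    have "(1 + norm \<xi>) ^ N * F \<le> (2 * D) ^ N * (1 + \<beta> ^ N) * F"
      using p F0 by (intro mult_right_mono) auto
    also have "\<dots> = (2 * D) ^ N * (F + \<beta> ^ N * F)" by (simp add: algebra_simps)
    also have "\<dots> \<le> (2 * D) ^ N * (L [] + S / (2 * pi) ^ N)"
      using FL bF D1 by (intro mult_left_mono add_mono) auto
    finally show "(1 + norm \<xi>) ^ N * norm (fourier \<phi> \<xi>) \<le> (2 * D) ^ N * (L [] + S / (2 * pi) ^ N)"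
      unfolding F_def .
  qed
qed

lemma fourier_meas:
  fixes \<phi> :: "'a::euclidean_space \<Rightarrow> complex"
  assumes s\<phi>: "schwartz \<phi>"
  shows "fourier \<phi> \<in> borel_measurable borel"
proof -
  have [measurable]: "\<phi> \<in> borel_measurable borel" by (rule schwartz_meas[OF s\<phi>])
  have [measurable]: "\<phi> \<in> borel_measurable lborel" by (simp add: schwartz_meas[OF s\<phi>])
  have [measurable]: "cis \<in> borel_measurable borel" by (intro borel_measurable_continuous_onI continuous_intros)
  have "(\<lambda>(\<xi>, x). cis (- 2 * pi * (x \<bullet> \<xi>)) * \<phi> x) \<in> borel_measurable (borel \<Otimes>\<^sub>M lborel)"
    by measurable
  then show ?thesis unfolding fourier_def[abs_def]
    by (rule lborel.borel_measurable_lebesgue_integral)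
qed

lemma tbp_sets: "translation_bounded_pos M \<Longrightarrow> sets M = sets borel"
  unfolding translation_bounded_pos_def by simp

lemma tbp_space: "translation_bounded_pos M \<Longrightarrow> space M = UNIV"
  using sets_eq_imp_space_eq[OF tbp_sets] by (metis space_borel)

lemma tbp_translate_finite:
  assumes "translation_bounded_pos M" "compact K"
  shows "emeasure M ((+) t ` K) < \<infinity>"
proof -
  have "emeasure M ((+) t ` K) \<le> (SUP t. emeasure M ((+) t ` K))" by (rule SUP_upper) simp
  also have "\<dots> < \<infinity>" using assms(2) assms(1)[unfolded translation_bounded_pos_def, THEN conjunct2] by blast
  finally show ?thesis .
qed

lemma tbp_cball_bound:
  fixes M :: "'a::euclidean_space measure"
  assumes "translation_bounded_pos M"
  shows "\<exists>B\<ge>0. \<forall>t. emeasure M (cball t r) \<le> ennreal B"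
proof -
  define S where "S = (SUP t. emeasure M ((+) t ` cball (0::'a) r))"
  have all: "\<forall>K. compact K \<longrightarrow> (SUP t. emeasure M ((+) t ` K)) < \<infinity>"
    using assms unfolding translation_bounded_pos_def by (rule conjunct2)
  have "S < \<infinity>" unfolding S_def by (rule all[rule_format]) simp
  then have S: "ennreal (enn2real S) = S" by simp
  show ?thesis
  proof (intro exI conjI allI)
    fix t :: 'a
    have "emeasure M (cball t r) = emeasure M ((+) t ` cball 0 r)" by simp
    also have "\<dots> \<le> S" unfolding S_def by (rule SUP_upper) simp
    finally show "emeasure M (cball t r) \<le> ennreal (enn2real S)" unfolding S .
  qed simp
qed

lemma tbp_sigma_finite:
  fixes M :: "'a::euclidean_space measure"
  assumes "translation_bounded_pos M"
  shows "sigma_finite_measure M"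
proof (rule sigma_finite_measure.intro, intro exI conjI)
  show "countable (range (\<lambda>n::nat. cball (0::'a) (real n)))" by simp
  show "range (\<lambda>n::nat. cball (0::'a) (real n)) \<subseteq> sets M" unfolding tbp_sets[OF assms] by auto
  show "\<Union> (range (\<lambda>n::nat. cball (0::'a) (real n))) = space M"
    unfolding tbp_space[OF assms]
  proof (intro set_eqI iffI)
    fix x :: 'a
    obtain n where "norm x \<le> real n" using real_arch_simple by blast
    then show "x \<in> \<Union> (range (\<lambda>n::nat. cball (0::'a) (real n)))" by (intro UN_I[of n]) auto
  qed auto
  show "\<forall>a\<in>range (\<lambda>n::nat. cball (0::'a) (real n)). emeasure M a \<noteq> \<infinity>"
  proof
    fix a assume "a \<in> range (\<lambda>n::nat. cball (0::'a) (real n))"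
    then obtain n where a: "a = cball (0::'a) (real n)" by blast
    have "emeasure M ((+) 0 ` cball (0::'a) (real n)) < \<infinity>" by (rule tbp_translate_finite[OF assms compact_cball])
    then show "emeasure M a \<noteq> \<infinity>" unfolding a by simp
  qed
qed

lemma pair_meas_borel:
  assumes "sets M = sets borel" "f \<in> borel_measurable (borel \<Otimes>\<^sub>M borel)"
  shows "f \<in> borel_measurable (M \<Otimes>\<^sub>M lborel)"
proof -
  have "sets (M \<Otimes>\<^sub>M lborel) = sets (borel \<Otimes>\<^sub>M borel)"
    by (rule sets_pair_measure_cong) (use assms in auto)
  then have eq: "measurable (M \<Otimes>\<^sub>M lborel) borel = measurable (borel \<Otimes>\<^sub>M borel) borel"
    by (rule measurable_cong_sets) (rule refl)
  show ?thesis unfolding eq by (rule assms(2))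
qed

lemma ball_kernel_meas:
  fixes r :: real
  shows "(\<lambda>p::'a::euclidean_space \<times> 'a. indicator (ball (snd p) r) (fst p) :: real) \<in> borel_measurable (borel \<Otimes>\<^sub>M borel)"
proof -
  have eq: "(\<lambda>p::'a \<times> 'a. indicator (ball (snd p) r) (fst p) :: real) = indicator {p. dist (snd p) (fst p) < r}"
    by (auto simp: indicator_def)
  have "open {p::'a \<times> 'a. dist (snd p) (fst p) < r}"
    by (intro open_Collect_less continuous_intros)
  then have "{p::'a \<times> 'a. dist (snd p) (fst p) < r} \<in> sets (borel \<Otimes>\<^sub>M borel)"
    unfolding borel_prod by simp
  then show ?thesis unfolding eq by simp
qed

lemma tbp_meas:
  assumes "translation_bounded_pos M" "g \<in> borel_measurable borel"
  shows "g \<in> borel_measurable M"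
proof -
  have eq: "borel_measurable M = borel_measurable borel"
    by (rule measurable_cong_sets) (rule tbp_sets[OF assms(1)], rule refl)
  show ?thesis unfolding eq by (rule assms(2))
qed

lemma ball_kernel_meas'[measurable]:
  "(\<lambda>p::'a::euclidean_space \<times> 'a. indicator (ball (snd p) r) (fst p) :: real) \<in> borel_measurable (borel \<Otimes>\<^sub>M borel)"
  by (rule ball_kernel_meas)

lemma ball_vol:
  fixes r :: real and x :: "'a::euclidean_space"
  assumes "r > 0"
  shows "emeasure lborel (ball x r) = ennreal (measure lborel (ball (0::'a) r))"
    and "measure lborel (ball x r) = measure lborel (ball (0::'a) r)"
    and "measure lborel (ball (0::'a) r) > 0"
proof -
  have v: "unit_ball_vol (real DIM('a)) * r ^ DIM('a) > 0" using assms by (intro mult_pos_pos unit_ball_vol_pos) auto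
  show "emeasure lborel (ball x r) = ennreal (measure lborel (ball (0::'a) r))"
    using assms by (simp add: emeasure_ball content_ball)
  show "measure lborel (ball x r) = measure lborel (ball (0::'a) r)"
    using assms by (simp add: content_ball)
  show "measure lborel (ball (0::'a) r) > 0"
    using assms v by (simp add: content_ball)
qed

lemma ind_ball_swap: "indicator (ball t r) \<xi> = indicator (ball \<xi> r) t"
  by (simp add: indicator_def dist_commute)

lemma tbp_wt_integrable:
  fixes M :: "'a::euclidean_space measure"
  assumes M: "translation_bounded_pos M"
  shows "integrable M (wt (DIM('a)+2))"
proof -
  define N where "N = DIM('a) + 2"
  interpret sM: sigma_finite_measure M by (rule tbp_sigma_finite[OF M])
  interpret P: pair_sigma_finite M lborel ..
  define c where "c = measure lborel (ball (0::'a) 1)"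
  have c0: "c > 0" unfolding c_def by (rule ball_vol(3)) simp
  obtain B where B: "B \<ge> 0" "\<And>t. emeasure M (cball t 1) \<le> ennreal B"
    using tbp_cball_bound[OF M, of 1] by blast
  have Bb: "emeasure M (ball t 1) \<le> ennreal B" for t
  proof -
    have "cball t 1 \<in> sets M" unfolding tbp_sets[OF M] by simp
    then have "emeasure M (ball t 1) \<le> emeasure M (cball t 1)" by (intro emeasure_mono) auto
    then show ?thesis using B(2)[of t] by (rule order_trans)
  qed
  have wm: "wt N \<in> borel_measurable M" by (rule tbp_meas[OF M]) simp
  have wme: "(\<lambda>\<xi>. ennreal (wt N \<xi>)) \<in> borel_measurable M" by (rule tbp_meas[OF M]) simp
  have km: "(\<lambda>(\<xi>, t). ennreal (2 ^ N * wt N t * indicator (ball t 1) \<xi>)) \<in> borel_measurable (M \<Otimes>\<^sub>M lborel)"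
    by (rule pair_meas_borel[OF tbp_sets[OF M]]) (simp add: split_beta')
  have inner: "(\<integral>\<^sup>+t. ennreal (wt N \<xi> * indicator (ball t 1) \<xi>) \<partial>lborel) = ennreal (wt N \<xi>) * ennreal c" for \<xi> :: 'a
  proof -
    have "(\<integral>\<^sup>+t. ennreal (wt N \<xi> * indicator (ball t 1) \<xi>) \<partial>lborel) = (\<integral>\<^sup>+t. ennreal (wt N \<xi>) * indicator (ball \<xi> 1) t \<partial>lborel)"
      by (intro nn_integral_cong) (simp add: indicator_def dist_commute)
    also have "\<dots> = ennreal (wt N \<xi>) * emeasure lborel (ball \<xi> 1)" by (simp add: nn_integral_cmult_indicator)
    also have "\<dots> = ennreal (wt N \<xi>) * ennreal c" unfolding c_def by (simp add: ball_vol(1))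
    finally show ?thesis .
  qed
  have "ennreal c * (\<integral>\<^sup>+\<xi>. ennreal (wt N \<xi>) \<partial>M) = (\<integral>\<^sup>+\<xi>. ennreal (wt N \<xi>) * ennreal c \<partial>M)"
    by (subst nn_integral_cmult[symmetric]) (auto simp: mult.commute wme)
  also have "\<dots> = (\<integral>\<^sup>+\<xi>. (\<integral>\<^sup>+t. ennreal (wt N \<xi> * indicator (ball t 1) \<xi>) \<partial>lborel) \<partial>M)"
    by (simp add: inner)
  also have "\<dots> \<le> (\<integral>\<^sup>+\<xi>. (\<integral>\<^sup>+t. ennreal (2 ^ N * wt N t * indicator (ball t 1) \<xi>) \<partial>lborel) \<partial>M)"
  proof (intro nn_integral_mono ennreal_leI)
    fix \<xi> t :: 'a
    show "wt N \<xi> * indicator (ball t 1) \<xi> \<le> 2 ^ N * wt N t * indicator (ball t 1) \<xi>"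
    proof (cases "\<xi> \<in> ball t 1")
      case True
      then have "norm (\<xi> - t) \<le> 1" by (simp add: dist_norm norm_minus_commute)
      from wt_shift[OF this] show ?thesis using True by simp
    qed simp
  qed
  also have "\<dots> = (\<integral>\<^sup>+t. (\<integral>\<^sup>+\<xi>. ennreal (2 ^ N * wt N t * indicator (ball t 1) \<xi>) \<partial>M) \<partial>lborel)"
    using P.Fubini'[OF km] by simp
  also have "\<dots> = (\<integral>\<^sup>+t. ennreal (2 ^ N * wt N t) * emeasure M (ball t 1) \<partial>lborel)"
  proof (intro nn_integral_cong)
    fix t :: 'a
    have "ball t 1 \<in> sets M" unfolding tbp_sets[OF M] by simp
    then show "(\<integral>\<^sup>+\<xi>. ennreal (2 ^ N * wt N t * indicator (ball t 1) \<xi>) \<partial>M) = ennreal (2 ^ N * wt N t) * emeasure M (ball t 1)"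
      by (subst nn_integral_cmult_indicator[symmetric]) (auto intro!: nn_integral_cong simp: indicator_def)
  qed
  also have "\<dots> \<le> (\<integral>\<^sup>+t. ennreal (2 ^ N * B) * ennreal (wt N (t::'a)) \<partial>lborel)"
  proof (rule nn_integral_mono)
    fix t :: 'a
    have "ennreal (2 ^ N * wt N t) * emeasure M (ball t 1) \<le> ennreal (2 ^ N * wt N t) * ennreal B"
      by (intro mult_left_mono Bb) auto
    also have "\<dots> = ennreal (2 ^ N * B) * ennreal (wt N t)"
      using wt_pos[of N t] B(1) by (simp add: ennreal_mult'[symmetric] mult_ac)
    finally show "ennreal (2 ^ N * wt N t) * emeasure M (ball t 1) \<le> ennreal (2 ^ N * B) * ennreal (wt N t)" .
  qed
  also have "\<dots> = ennreal (2 ^ N * B) * (\<integral>\<^sup>+t. ennreal (wt N (t::'a)) \<partial>lborel)"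
    by (rule nn_integral_cmult) simp
  also have "\<dots> < \<infinity>"
  proof -
    have "integrable lborel (wt N :: 'a \<Rightarrow> real)" unfolding N_def by (rule wt_integrable)
    then have "(\<integral>\<^sup>+t. ennreal (wt N (t::'a)) \<partial>lborel) < \<infinity>"
      by (simp add: integrable_iff_bounded abs_of_pos[OF wt_pos])
    then show ?thesis by (simp add: ennreal_mult_less_top)
  qed
  finally have "ennreal c * (\<integral>\<^sup>+\<xi>. ennreal (wt N \<xi>) \<partial>M) < \<infinity>" .
  then have "(\<integral>\<^sup>+\<xi>. ennreal (wt N \<xi>) \<partial>M) < \<infinity>" using c0 by (auto simp: ennreal_mult_less_top)
  then have "(\<integral>\<^sup>+\<xi>. ennreal (norm (wt N \<xi>)) \<partial>M) < \<infinity>"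
    by (simp add: abs_of_pos[OF wt_pos])
  then show ?thesis unfolding N_def[symmetric] by (intro integrableI_bounded wm)
qed

lemma avg_lemma:
  fixes M :: "'a::euclidean_space measure" and f :: "'a \<Rightarrow> complex"
  assumes M: "translation_bounded_pos M" and r: "r > 0"
    and fm: "f \<in> borel_measurable borel"
    and fb: "\<And>\<xi>. norm (f \<xi>) \<le> A * wt (DIM('a)+2) \<xi>"
  shows "integrable M f"
    and "integrable lborel (\<lambda>t. \<integral>\<xi>. indicator (ball t r) \<xi> *\<^sub>R f \<xi> \<partial>M)"
    and "(\<integral>t. (\<integral>\<xi>. indicator (ball t r) \<xi> *\<^sub>R f \<xi> \<partial>M) \<partial>lborel) = measure lborel (ball (0::'a) r) *\<^sub>R integral\<^sup>L M f"
proof -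
  define N where "N = DIM('a) + 2"
  interpret sM: sigma_finite_measure M by (rule tbp_sigma_finite[OF M])
  interpret P: pair_sigma_finite M lborel ..
  define c where "c = measure lborel (ball (0::'a) r)"
  have c0: "c > 0" unfolding c_def by (rule ball_vol(3)[OF r])
  have ball_fin: "emeasure lborel (ball x r) < \<infinity>" for x :: 'a
    using ball_vol(1)[OF r, of x] by simp
  have fM[measurable]: "f \<in> borel_measurable M" by (rule tbp_meas[OF M fm])
  note fm[measurable]
  show intf: "integrable M f"
  proof (rule Bochner_Integration.integrable_bound[OF integrable_mult_right[OF tbp_wt_integrable[OF M], of A]])
    show "AE x in M. norm (f x) \<le> norm (A * wt (DIM('a) + 2) x)"
      using fb by (auto intro: order_trans[OF _ abs_ge_self])
  qed (rule fM)
  define G where "G \<xi> t = indicator (ball t r) \<xi> *\<^sub>R f \<xi>" for \<xi> t :: 'a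
  have Gm: "(\<lambda>(\<xi>, t). G \<xi> t) \<in> borel_measurable (M \<Otimes>\<^sub>M lborel)"
    by (rule pair_meas_borel[OF tbp_sets[OF M]]) (unfold split_beta' G_def, measurable)
  have innerN: "(\<integral>\<^sup>+t. ennreal (norm (G \<xi> t)) \<partial>lborel) = ennreal (norm (f \<xi>)) * ennreal c" for \<xi>
  proof -
    have "(\<integral>\<^sup>+t. ennreal (norm (G \<xi> t)) \<partial>lborel) = (\<integral>\<^sup>+t. ennreal (norm (f \<xi>)) * indicator (ball \<xi> r) t \<partial>lborel)"
      by (intro nn_integral_cong) (simp add: G_def indicator_def dist_commute)
    also have "\<dots> = ennreal (norm (f \<xi>)) * emeasure lborel (ball \<xi> r)" by (simp add: nn_integral_cmult_indicator)
    also have "\<dots> = ennreal (norm (f \<xi>)) * ennreal c" unfolding c_def by (simp add: ball_vol(1)[OF r])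
    finally show ?thesis .
  qed
  have intG: "integrable (M \<Otimes>\<^sub>M lborel) (\<lambda>(\<xi>, t). G \<xi> t)"
  proof (rule integrableI_bounded)
    show "(\<lambda>(\<xi>, t). G \<xi> t) \<in> borel_measurable (M \<Otimes>\<^sub>M lborel)" by (rule Gm)
    have m2: "(\<lambda>p. ennreal (norm (case p of (\<xi>, t) \<Rightarrow> G \<xi> t))) \<in> borel_measurable (M \<Otimes>\<^sub>M lborel)"
      using Gm by measurable
    have "(\<integral>\<^sup>+p. ennreal (norm (case p of (\<xi>, t) \<Rightarrow> G \<xi> t)) \<partial>(M \<Otimes>\<^sub>M lborel))
        = (\<integral>\<^sup>+\<xi>. (\<integral>\<^sup>+t. ennreal (norm (G \<xi> t)) \<partial>lborel) \<partial>M)"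
      using lborel.nn_integral_fst[OF m2] by simp
    also have "\<dots> = (\<integral>\<^sup>+\<xi>. ennreal (norm (f \<xi>)) * ennreal c \<partial>M)" by (simp add: innerN)
    also have "\<dots> = ennreal c * (\<integral>\<^sup>+\<xi>. ennreal (norm (f \<xi>)) \<partial>M)"
      by (subst nn_integral_cmult[symmetric]) (auto simp: mult.commute)
    also have "\<dots> < \<infinity>" using intf by (simp add: integrable_iff_bounded ennreal_mult_less_top)
    finally show "(\<integral>\<^sup>+p. ennreal (norm (case p of (\<xi>, t) \<Rightarrow> G \<xi> t)) \<partial>(M \<Otimes>\<^sub>M lborel)) < \<infinity>" .
  qed
  show "integrable lborel (\<lambda>t. \<integral>\<xi>. indicator (ball t r) \<xi> *\<^sub>R f \<xi> \<partial>M)"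
    using P.integrable_snd[OF intG] unfolding G_def .
  have "(\<integral>t. (\<integral>\<xi>. G \<xi> t \<partial>M) \<partial>lborel) = (\<integral>\<xi>. (\<integral>t. G \<xi> t \<partial>lborel) \<partial>M)"
    by (rule P.Fubini_integral[OF intG])
  also have "\<dots> = (\<integral>\<xi>. c *\<^sub>R f \<xi> \<partial>M)"
  proof (rule Bochner_Integration.integral_cong[OF refl])
    fix \<xi> assume "\<xi> \<in> space M"
    have "(\<integral>t. G \<xi> t \<partial>lborel) = (\<integral>t. indicator (ball \<xi> r) t *\<^sub>R f \<xi> \<partial>lborel)"
      by (intro Bochner_Integration.integral_cong) (simp_all add: G_def indicator_def dist_commute)
    also have "\<dots> = measure lborel (ball \<xi> r) *\<^sub>R f \<xi>"
      by (subst integral_scaleR_left) (use ball_fin in \<open>auto simp: integrable_indicator_iff\<close>)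
    also have "\<dots> = c *\<^sub>R f \<xi>" unfolding c_def using ball_vol(2)[OF r, of \<xi>] by metis
    finally show "(\<integral>t. G \<xi> t \<partial>lborel) = c *\<^sub>R f \<xi>" .
  qed
  also have "\<dots> = c *\<^sub>R integral\<^sup>L M f" by simp
  finally show "(\<integral>t. (\<integral>\<xi>. indicator (ball t r) \<xi> *\<^sub>R f \<xi> \<partial>M) \<partial>lborel) = measure lborel (ball (0::'a) r) *\<^sub>R integral\<^sup>L M f"
    unfolding G_def c_def .
qed

lemma tbp_fin_sub:
  fixes m :: "'a::euclidean_space measure"
  assumes "translation_bounded_pos m" "compact S" "A \<subseteq> S"
  shows "emeasure m A < \<infinity>"
proof -
  have S: "S \<in> sets m" unfolding tbp_sets[OF assms(1)] using assms(2) by (simp add: borel_compact)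
  have "emeasure m ((+) 0 ` S) < \<infinity>" by (rule tbp_translate_finite[OF assms(1,2)])
  then have "emeasure m S < \<infinity>" by simp
  moreover have "emeasure m A \<le> emeasure m S" using S assms(3) by (intro emeasure_mono)
  ultimately show ?thesis by (rule le_less_trans[rotated])
qed

lemma pos_ind_integrable:
  fixes m :: "'a measure" and h :: "'a \<Rightarrow> complex"
  assumes "A \<in> sets m" "emeasure m A < \<infinity>" "h \<in> borel_measurable m" "\<And>x. x \<in> A \<Longrightarrow> norm (h x) \<le> e"
  shows "integrable m (\<lambda>x. indicator A x *\<^sub>R h x)"
  by (rule integrableI_bounded_set_indicator[OF assms(1,3,2)]) (use assms(4) in auto)

lemma pos_ind_bound:
  fixes m :: "'a measure" and h :: "'a \<Rightarrow> complex"
  assumes A: "A \<in> sets m" "emeasure m A < \<infinity>" and hm: "h \<in> borel_measurable m"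
    and hb: "\<And>x. x \<in> A \<Longrightarrow> norm (h x) \<le> e"
  shows "norm (\<integral>x. indicator A x *\<^sub>R h x \<partial>m) \<le> e * measure m A"
proof -
  have i1: "integrable m (\<lambda>x. indicator A x *\<^sub>R h x)" by (rule pos_ind_integrable[OF A hm hb])
  have i2: "integrable m (\<lambda>x. indicator A x *\<^sub>R e)" by (rule integrable_indicator[OF A])
  have "norm (\<integral>x. indicator A x *\<^sub>R h x \<partial>m) \<le> (\<integral>x. norm (indicator A x *\<^sub>R h x) \<partial>m)"
    by (rule integral_norm_bound)
  also have "\<dots> \<le> (\<integral>x. indicator A x *\<^sub>R e \<partial>m)"
    using hb by (intro integral_mono integrable_norm i1 i2) (auto simp: indicator_def)
  also have "\<dots> = e * measure m A" using A by simp
  finally show ?thesis .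
qed

definition cm_ok :: "'a cmeasure \<Rightarrow> ('a \<Rightarrow> complex) \<Rightarrow> bool" where
  "cm_ok \<mu> f \<longleftrightarrow> integrable (cm_rp \<mu>) f \<and> integrable (cm_rn \<mu>) f \<and> integrable (cm_ip \<mu>) f \<and> integrable (cm_in \<mu>) f"

lemma cm_integral_diff:
  assumes "cm_ok \<mu> f" "cm_ok \<mu> g"
  shows "cm_integral \<mu> (\<lambda>x. f x - g x) = cm_integral \<mu> f - cm_integral \<mu> g"
  using assms unfolding cm_ok_def cm_integral_def by (simp add: algebra_simps)

lemma cm_ok_diff: "cm_ok \<mu> f \<Longrightarrow> cm_ok \<mu> g \<Longrightarrow> cm_ok \<mu> (\<lambda>x. f x - g x)"
  unfolding cm_ok_def by auto

lemma cm_ok_sum: "finite V \<Longrightarrow> (\<And>v. v \<in> V \<Longrightarrow> cm_ok \<mu> (f v)) \<Longrightarrow> cm_ok \<mu> (\<lambda>x. \<Sum>v\<in>V. f v x)"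
  unfolding cm_ok_def by auto

lemma cm_integral_sum:
  assumes "finite V" "\<And>v. v \<in> V \<Longrightarrow> cm_ok \<mu> (f v)"
  shows "cm_integral \<mu> (\<lambda>x. \<Sum>v\<in>V. f v x) = (\<Sum>v\<in>V. cm_integral \<mu> (f v))"
proof -
  have "integral\<^sup>L (cm_rp \<mu>) (\<lambda>x. \<Sum>v\<in>V. f v x) = (\<Sum>v\<in>V. integral\<^sup>L (cm_rp \<mu>) (f v))"
    using assms unfolding cm_ok_def by (intro Bochner_Integration.integral_sum) auto
  moreover have "integral\<^sup>L (cm_rn \<mu>) (\<lambda>x. \<Sum>v\<in>V. f v x) = (\<Sum>v\<in>V. integral\<^sup>L (cm_rn \<mu>) (f v))"
    using assms unfolding cm_ok_def by (intro Bochner_Integration.integral_sum) auto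
  moreover have "integral\<^sup>L (cm_ip \<mu>) (\<lambda>x. \<Sum>v\<in>V. f v x) = (\<Sum>v\<in>V. integral\<^sup>L (cm_ip \<mu>) (f v))"
    using assms unfolding cm_ok_def by (intro Bochner_Integration.integral_sum) auto
  moreover have "integral\<^sup>L (cm_in \<mu>) (\<lambda>x. \<Sum>v\<in>V. f v x) = (\<Sum>v\<in>V. integral\<^sup>L (cm_in \<mu>) (f v))"
    using assms unfolding cm_ok_def by (intro Bochner_Integration.integral_sum) auto
  ultimately show ?thesis unfolding cm_integral_def
    by (simp add: sum_subtractf sum_distrib_left[symmetric] sum.distrib)
qed

definition msum :: "'a cmeasure \<Rightarrow> 'a set \<Rightarrow> real" where
  "msum \<mu> A = measure (cm_rp \<mu>) A + measure (cm_rn \<mu>) A + measure (cm_ip \<mu>) A + measure (cm_in \<mu>) A"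

lemma Minf_parts:
  assumes "Minf \<mu>"
  shows "translation_bounded_pos (cm_rp \<mu>)" "translation_bounded_pos (cm_rn \<mu>)"
        "translation_bounded_pos (cm_ip \<mu>)" "translation_bounded_pos (cm_in \<mu>)"
  using assms unfolding Minf_def by auto

lemma cm_ind_ok:
  fixes \<mu> :: "'a::euclidean_space cmeasure"
  assumes "Minf \<mu>" "compact S" "A \<subseteq> S" "A \<in> sets borel" "h \<in> borel_measurable borel"
    "\<And>x. x \<in> A \<Longrightarrow> norm (h x) \<le> e"
  shows "cm_ok \<mu> (\<lambda>x. indicator A x *\<^sub>R h x)"
proof -
  have *: "integrable m (\<lambda>x. indicator A x *\<^sub>R h x)" if m: "translation_bounded_pos m" for m :: "'a measure"
  proof (rule pos_ind_integrable[where e=e])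
    show "A \<in> sets m" unfolding tbp_sets[OF m] by (rule assms(4))
    show "emeasure m A < \<infinity>" by (rule tbp_fin_sub[OF m assms(2,3)])
    show "h \<in> borel_measurable m" by (rule tbp_meas[OF m assms(5)])
  qed (rule assms(6))
  show ?thesis unfolding cm_ok_def using Minf_parts[OF assms(1)] by (auto intro: *)
qed

lemma cm_ind_bound:
  fixes \<mu> :: "'a::euclidean_space cmeasure"
  assumes "Minf \<mu>" "compact S" "A \<subseteq> S" "A \<in> sets borel" "h \<in> borel_measurable borel"
    "\<And>x. x \<in> A \<Longrightarrow> norm (h x) \<le> e"
  shows "norm (cm_integral \<mu> (\<lambda>x. indicator A x *\<^sub>R h x)) \<le> e * msum \<mu> A"
proof -
  have *: "norm (\<integral>x. indicator A x *\<^sub>R h x \<partial>m) \<le> e * measure m A" if m: "translation_bounded_pos m" for m :: "'a measure"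
  proof (rule pos_ind_bound)
    show "A \<in> sets m" unfolding tbp_sets[OF m] by (rule assms(4))
    show "emeasure m A < \<infinity>" by (rule tbp_fin_sub[OF m assms(2,3)])
    show "h \<in> borel_measurable m" by (rule tbp_meas[OF m assms(5)])
  qed (rule assms(6))
  note P = Minf_parts[OF assms(1)]
  let ?I = "\<lambda>m. \<integral>x. indicator A x *\<^sub>R h x \<partial>m"
  have "norm (cm_integral \<mu> (\<lambda>x. indicator A x *\<^sub>R h x))
      \<le> norm (?I (cm_rp \<mu>)) + norm (?I (cm_rn \<mu>)) + norm (?I (cm_ip \<mu>)) + norm (?I (cm_in \<mu>))"
  proof -
    have t1: "norm (cm_integral \<mu> (\<lambda>x. indicator A x *\<^sub>R h x)) \<le> norm (?I (cm_rp \<mu>) - ?I (cm_rn \<mu>)) + norm (\<i> * (?I (cm_ip \<mu>) - ?I (cm_in \<mu>)))"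
      unfolding cm_integral_def by (rule norm_triangle_ineq)
    have t2: "norm (\<i> * (?I (cm_ip \<mu>) - ?I (cm_in \<mu>))) = norm (?I (cm_ip \<mu>) - ?I (cm_in \<mu>))"
      by (simp add: norm_mult)
    have t3: "norm (?I (cm_rp \<mu>) - ?I (cm_rn \<mu>)) \<le> norm (?I (cm_rp \<mu>)) + norm (?I (cm_rn \<mu>))"
      by (rule norm_triangle_ineq4)
    have t4: "norm (?I (cm_ip \<mu>) - ?I (cm_in \<mu>)) \<le> norm (?I (cm_ip \<mu>)) + norm (?I (cm_in \<mu>))"
      by (rule norm_triangle_ineq4)
    show ?thesis using t1 t2 t3 t4 by linarith
  qed
  also have "\<dots> \<le> e * measure (cm_rp \<mu>) A + e * measure (cm_rn \<mu>) A + e * measure (cm_ip \<mu>) A + e * measure (cm_in \<mu>) A"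
    using *[OF P(1)] *[OF P(2)] *[OF P(3)] *[OF P(4)] by linarith
  also have "\<dots> = e * msum \<mu> A" unfolding msum_def by (simp add: algebra_simps)
  finally show ?thesis .
qed

lemma cm_ind_const:
  fixes \<mu> :: "'a::euclidean_space cmeasure"
  assumes "Minf \<mu>" "compact S" "A \<subseteq> S" "A \<in> sets borel"
  shows "cm_integral \<mu> (\<lambda>x. indicator A x *\<^sub>R v) = v * cm_val \<mu> A"
proof -
  have *: "(\<integral>x. indicator A x *\<^sub>R v \<partial>m) = measure m A *\<^sub>R v" if m: "translation_bounded_pos m" for m :: "'a measure"
  proof -
    have "A \<in> sets m" unfolding tbp_sets[OF m] by (rule assms(4))
    moreover have "emeasure m A < \<infinity>" by (rule tbp_fin_sub[OF m assms(2,3)])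
    ultimately show ?thesis by simp
  qed
  note P = Minf_parts[OF assms(1)]
  show ?thesis unfolding cm_integral_def cm_val_def *[OF P(1)] *[OF P(2)] *[OF P(3)] *[OF P(4)]
    by (simp add: scaleR_conv_of_real algebra_simps)
qed

lemma floor_approx:
  fixes a e :: real assumes "e > 0"
  shows "\<bar>a - e * of_int \<lfloor>a / e\<rfloor>\<bar> \<le> e"
proof -
  have "of_int \<lfloor>a / e\<rfloor> \<le> a / e" "a / e < of_int \<lfloor>a / e\<rfloor> + 1" by linarith+
  then have "e * of_int \<lfloor>a / e\<rfloor> \<le> e * (a / e)" "e * (a / e) < e * (of_int \<lfloor>a / e\<rfloor> + 1)"
    using assms by (simp_all only: mult_left_mono less_imp_le mult_strict_left_mono)
  then have "e * of_int \<lfloor>a / e\<rfloor> \<le> a" "a < e * of_int \<lfloor>a / e\<rfloor> + e"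
    using assms by (simp_all add: algebra_simps)
  then show ?thesis by linarith
qed

lemma floor_range:
  fixes y c :: real assumes "\<bar>y\<bar> \<le> c"
  shows "\<lfloor>y\<rfloor> \<in> {-\<lceil>c\<rceil>..\<lceil>c\<rceil>}"
proof -
  have "\<lfloor>y\<rfloor> \<le> \<lfloor>c\<rfloor>" using assms by (intro floor_mono) linarith
  also have "\<dots> \<le> \<lceil>c\<rceil>" by (rule floor_le_ceiling)
  finally have 1: "\<lfloor>y\<rfloor> \<le> \<lceil>c\<rceil>" .
  have "\<lfloor>-c\<rfloor> \<le> \<lfloor>y\<rfloor>" using assms by (intro floor_mono) linarith
  then have 2: "-\<lceil>c\<rceil> \<le> \<lfloor>y\<rfloor>" by (simp add: ceiling_def)
  show ?thesis using 1 2 by simp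
qed

lemma tri3:
  fixes af bf ag bg :: complex
  shows "norm (af - bf) \<le> norm (ag - bg) + norm (af - ag) + norm (bf - bg)"
proof -
  have "norm (af - bf) = norm (((ag - bg) + (af - ag)) - (bf - bg))"
    by (rule arg_cong[where f=norm]) simp
  also have "\<dots> \<le> norm ((ag - bg) + (af - ag)) + norm (bf - bg)" by (rule norm_triangle_ineq4)
  also have "\<dots> \<le> norm (ag - bg) + norm (af - ag) + norm (bf - bg)"
    using norm_triangle_ineq[of "ag - bg" "af - ag"] by linarith
  finally show ?thesis .
qed

lemma cm_val_empty[simp]: "cm_val \<mu> {} = 0"
  unfolding cm_val_def by simp

lemma ball_ineq:
  fixes \<mu>a \<mu>b :: "'a::euclidean_space cmeasure" and f :: "'a \<Rightarrow> complex"
  assumes Ma: "Minf \<mu>a" and Mb: "Minf \<mu>b" and S: "compact S" and BS: "B \<subseteq> S" and Bm: "B \<in> sets borel"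
    and fm: "f \<in> borel_measurable borel" and fb: "\<And>x. x \<in> B \<Longrightarrow> norm (f x) \<le> c" and c0: "c \<ge> 0"
    and TV: "total_variation (\<lambda>A. cm_val \<mu>a A - cm_val \<mu>b A) S < \<infinity>"
  shows "norm (cm_integral \<mu>a (\<lambda>x. indicator B x *\<^sub>R f x) - cm_integral \<mu>b (\<lambda>x. indicator B x *\<^sub>R f x))
          \<le> c * enn2real (total_variation (\<lambda>A. cm_val \<mu>a A - cm_val \<mu>b A) S)"
proof -
  define \<nu> where "\<nu> A = cm_val \<mu>a A - cm_val \<mu>b A" for A
  define T where "T = enn2real (total_variation \<nu> S)"
  define Mt where "Mt = msum \<mu>a B + msum \<mu>b B"
  define L where "L = norm (cm_integral \<mu>a (\<lambda>x. indicator B x *\<^sub>R f x) - cm_integral \<mu>b (\<lambda>x. indicator B x *\<^sub>R f x))"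
  have T0: "T \<ge> 0" unfolding T_def by simp
  have Mt0: "Mt \<ge> 0" unfolding Mt_def msum_def by simp
  have TVf: "total_variation \<nu> S < \<infinity>" using TV unfolding \<nu>_def .
  have Sb: "S \<in> sets borel" using S by (simp add: borel_compact)
  note fm' = fm[measurable]
  have key: "L \<le> (c + 2 * \<epsilon>) * T + 2 * \<epsilon> * Mt" if ep: "\<epsilon> > 0" for \<epsilon>
  proof -
    define g where "g x = complex_of_real \<epsilon> * (of_int \<lfloor>Re (f x) / \<epsilon>\<rfloor> + \<i> * of_int \<lfloor>Im (f x) / \<epsilon>\<rfloor>)" for x
    have gm[measurable]: "g \<in> borel_measurable borel" unfolding g_def by measurable
    have gerr: "norm (f x - g x) \<le> 2 * \<epsilon>" for x
    proof -
      have "norm (f x - g x) \<le> \<bar>Re (f x - g x)\<bar> + \<bar>Im (f x - g x)\<bar>" by (rule cmod_le)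
      also have "\<bar>Re (f x - g x)\<bar> = \<bar>Re (f x) - \<epsilon> * of_int \<lfloor>Re (f x) / \<epsilon>\<rfloor>\<bar>" by (simp add: g_def)
      also have "\<bar>Im (f x - g x)\<bar> = \<bar>Im (f x) - \<epsilon> * of_int \<lfloor>Im (f x) / \<epsilon>\<rfloor>\<bar>" by (simp add: g_def)
      finally show ?thesis using floor_approx[OF ep, of "Re (f x)"] floor_approx[OF ep, of "Im (f x)"] by linarith
    qed
    have gb: "norm (g x) \<le> c + 2 * \<epsilon>" if "x \<in> B" for x
      using norm_triangle_ineq4[of "f x" "f x - g x"] gerr[of x] fb[OF that] by simp
    define K where "K = \<lceil>c / \<epsilon>\<rceil>"
    define V where "V = g ` B"
    have finV: "finite V"
    proof (rule finite_subset)
      show "V \<subseteq> (\<lambda>(m, n). complex_of_real \<epsilon> * (of_int m + \<i> * of_int n)) ` ({-K..K} \<times> {-K..K})"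
      proof
        fix v assume "v \<in> V"
        then obtain x where x: "x \<in> B" "v = g x" unfolding V_def by blast
        have "\<bar>Re (f x) / \<epsilon>\<bar> \<le> c / \<epsilon>" using abs_Re_le_cmod[of "f x"] fb[OF x(1)] ep
          by (simp add: abs_divide divide_right_mono)
        then have r: "\<lfloor>Re (f x) / \<epsilon>\<rfloor> \<in> {-K..K}" unfolding K_def by (rule floor_range)
        have "\<bar>Im (f x) / \<epsilon>\<bar> \<le> c / \<epsilon>" using abs_Im_le_cmod[of "f x"] fb[OF x(1)] ep
          by (simp add: abs_divide divide_right_mono)
        then have i: "\<lfloor>Im (f x) / \<epsilon>\<rfloor> \<in> {-K..K}" unfolding K_def by (rule floor_range)
        show "v \<in> (\<lambda>(m, n). complex_of_real \<epsilon> * (of_int m + \<i> * of_int n)) ` ({-K..K} \<times> {-K..K})"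
          using r i unfolding x(2) g_def by (intro image_eqI[of _ _ "(\<lfloor>Re (f x) / \<epsilon>\<rfloor>, \<lfloor>Im (f x) / \<epsilon>\<rfloor>)"]) auto
      qed
    qed simp
    define Bv where "Bv v = B \<inter> {x. g x = v}" for v
    have Bvm: "Bv v \<in> sets borel" for v unfolding Bv_def using Bm by measurable
    have BvB: "Bv v \<subseteq> B" for v unfolding Bv_def by auto
    have BvS: "Bv v \<subseteq> S" for v using BvB BS by blast
    have ind: "indicator B x *\<^sub>R g x = (\<Sum>v\<in>V. indicator (Bv v) x *\<^sub>R v)" for x
    proof (cases "x \<in> B")
      case True
      have "(\<Sum>v\<in>V. indicator (Bv v) x *\<^sub>R v) = (\<Sum>v\<in>V. if g x = v then v else 0)"
        by (intro sum.cong) (auto simp: Bv_def True indicator_def)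
      also have "\<dots> = g x" using finV True by (simp add: sum.delta' V_def)
      finally show ?thesis using True by simp
    next
      case False
      then show ?thesis by (simp add: Bv_def indicator_def)
    qed
    have Ig: "cm_integral \<mu> (\<lambda>x. indicator B x *\<^sub>R g x) = (\<Sum>v\<in>V. v * cm_val \<mu> (Bv v))" if M: "Minf \<mu>" for \<mu>
    proof -
      have "cm_integral \<mu> (\<lambda>x. indicator B x *\<^sub>R g x) = cm_integral \<mu> (\<lambda>x. \<Sum>v\<in>V. indicator (Bv v) x *\<^sub>R v)"
        unfolding ind ..
      also have "\<dots> = (\<Sum>v\<in>V. cm_integral \<mu> (\<lambda>x. indicator (Bv v) x *\<^sub>R v))"
        by (intro cm_integral_sum finV cm_ind_ok[OF M S BvS Bvm, where e="norm _"]) auto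
      also have "\<dots> = (\<Sum>v\<in>V. v * cm_val \<mu> (Bv v))"
        by (intro sum.cong refl cm_ind_const[OF M S BvS Bvm])
      finally show ?thesis .
    qed
    define Dg where "Dg = cm_integral \<mu>a (\<lambda>x. indicator B x *\<^sub>R g x) - cm_integral \<mu>b (\<lambda>x. indicator B x *\<^sub>R g x)"
    have Dg_eq: "Dg = (\<Sum>v\<in>V. v * \<nu> (Bv v))"
      unfolding Dg_def Ig[OF Ma] Ig[OF Mb] \<nu>_def by (simp add: sum_subtractf right_diff_distrib)
    have Vb: "norm v \<le> c + 2 * \<epsilon>" if "v \<in> V" for v using that gb unfolding V_def by auto
    have sumT: "(\<Sum>v\<in>V. norm (\<nu> (Bv v))) \<le> T"
    proof -
      define P' where "P' = Bv ` V"
      define P where "P = insert (S - B) P'"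
      have finP: "finite P" unfolding P_def P'_def using finV by simp
      have re: "(\<Sum>p\<in>P'. norm (\<nu> p)) = (\<Sum>v\<in>V. norm (\<nu> (Bv v)))"
        unfolding P'_def
      proof (subst sum.reindex_nontrivial[OF finV])
        fix v w assume "v \<in> V" "w \<in> V" "v \<noteq> w" "Bv v = Bv w"
        then have "Bv v = {}" unfolding Bv_def by auto
        then show "norm (\<nu> (Bv v)) = 0" by (simp add: \<nu>_def)
      qed (simp add: o_def)
      have s1: "(\<Sum>p\<in>P'. norm (\<nu> p)) \<le> (\<Sum>p\<in>P. norm (\<nu> p))"
        using finP by (intro sum_mono2) (auto simp: P_def)
      have Pb: "P \<subseteq> sets borel" unfolding P_def P'_def using Sb Bm Bvm by auto
      have Pd: "disjoint P" unfolding disjoint_def P_def P'_def Bv_def by auto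
      have PU: "\<Union> P = S"
      proof
        show "\<Union> P \<subseteq> S" unfolding P_def P'_def using BvS by auto
        show "S \<subseteq> \<Union> P"
        proof
          fix x assume x: "x \<in> S"
          show "x \<in> \<Union> P"
          proof (cases "x \<in> B")
            case True
            then have "x \<in> Bv (g x)" "g x \<in> V" unfolding Bv_def V_def by auto
            then show ?thesis unfolding P_def P'_def by auto
          next
            case False then show ?thesis using x unfolding P_def by auto
          qed
        qed
      qed
      have "ennreal (\<Sum>p\<in>P. norm (\<nu> p)) \<le> total_variation \<nu> S"
        unfolding total_variation_def by (rule SUP_upper) (use finP Pb Pd PU in blast)
      then have "(\<Sum>p\<in>P. norm (\<nu> p)) \<le> T"
        unfolding T_def using TVf enn2real_mono[of "ennreal (\<Sum>p\<in>P. norm (\<nu> p))" "total_variation \<nu> S"]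
        by (simp add: sum_nonneg)
      then show ?thesis using s1 unfolding re by linarith
    qed
    have nDg: "norm Dg \<le> (c + 2 * \<epsilon>) * T"
    proof -
      have "norm Dg \<le> (\<Sum>v\<in>V. norm (v * \<nu> (Bv v)))" unfolding Dg_eq by (rule norm_sum)
      also have "\<dots> \<le> (\<Sum>v\<in>V. (c + 2 * \<epsilon>) * norm (\<nu> (Bv v)))"
        unfolding norm_mult using Vb by (intro sum_mono mult_right_mono) auto
      also have "\<dots> = (c + 2 * \<epsilon>) * (\<Sum>v\<in>V. norm (\<nu> (Bv v)))" by (simp add: sum_distrib_left)
      also have "\<dots> \<le> (c + 2 * \<epsilon>) * T" using sumT c0 ep by (intro mult_left_mono) auto
      finally show ?thesis .
    qed
    have err: "norm (cm_integral \<mu> (\<lambda>x. indicator B x *\<^sub>R f x) - cm_integral \<mu> (\<lambda>x. indicator B x *\<^sub>R g x)) \<le> 2 * \<epsilon> * msum \<mu> B"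
      if M: "Minf \<mu>" for \<mu>
    proof -
      have "cm_integral \<mu> (\<lambda>x. indicator B x *\<^sub>R f x) - cm_integral \<mu> (\<lambda>x. indicator B x *\<^sub>R g x)
          = cm_integral \<mu> (\<lambda>x. indicator B x *\<^sub>R f x - indicator B x *\<^sub>R g x)"
        by (rule cm_integral_diff[symmetric]; rule cm_ind_ok[OF M S BS Bm]) (use fb gb in auto)
      also have "\<dots> = cm_integral \<mu> (\<lambda>x. indicator B x *\<^sub>R (f x - g x))"
        by (simp add: scaleR_diff_right)
      finally show ?thesis using cm_ind_bound[OF M S BS Bm, of "\<lambda>x. f x - g x" "2 * \<epsilon>"] gerr by simp
    qed
    have "L \<le> norm Dg + norm (cm_integral \<mu>a (\<lambda>x. indicator B x *\<^sub>R f x) - cm_integral \<mu>a (\<lambda>x. indicator B x *\<^sub>R g x))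
              + norm (cm_integral \<mu>b (\<lambda>x. indicator B x *\<^sub>R f x) - cm_integral \<mu>b (\<lambda>x. indicator B x *\<^sub>R g x))"
      unfolding L_def Dg_def by (rule tri3)
    also have "\<dots> \<le> (c + 2 * \<epsilon>) * T + 2 * \<epsilon> * msum \<mu>a B + 2 * \<epsilon> * msum \<mu>b B"
      using nDg err[OF Ma] err[OF Mb] by linarith
    also have "\<dots> = (c + 2 * \<epsilon>) * T + 2 * \<epsilon> * Mt" unfolding Mt_def by (simp add: algebra_simps)
    finally show ?thesis .
  qed
  have "L \<le> c * T"
  proof (rule field_le_epsilon)
    fix e :: real assume e: "e > 0"
    define \<epsilon> where "\<epsilon> = e / (2 * T + 2 * Mt + 1)"
    have d: "2 * T + 2 * Mt + 1 > 0" using T0 Mt0 by simp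
    have ep: "\<epsilon> > 0" unfolding \<epsilon>_def using e d by simp
    have "\<epsilon> * (2 * T + 2 * Mt + 1) = e" unfolding \<epsilon>_def using d by simp
    then have "(c + 2 * \<epsilon>) * T + 2 * \<epsilon> * Mt \<le> c * T + e" using ep by (simp add: algebra_simps)
    then show "L \<le> c * T + e" using key[OF ep] by linarith
  qed
  then show ?thesis unfolding L_def T_def \<nu>_def .
qed

lemma cm_avg:
  fixes \<mu> :: "'a::euclidean_space cmeasure" and f :: "'a \<Rightarrow> complex"
  assumes M: "Minf \<mu>" and r: "r > 0"
    and fm: "f \<in> borel_measurable borel"
    and fb: "\<And>\<xi>. norm (f \<xi>) \<le> A * wt (DIM('a)+2) \<xi>"
  shows "integrable lborel (\<lambda>t. cm_integral \<mu> (\<lambda>\<xi>. indicator (ball t r) \<xi> *\<^sub>R f \<xi>))"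
    and "(\<integral>t. cm_integral \<mu> (\<lambda>\<xi>. indicator (ball t r) \<xi> *\<^sub>R f \<xi>) \<partial>lborel) = measure lborel (ball (0::'a) r) *\<^sub>R cm_integral \<mu> f"
proof -
  note P = Minf_parts[OF M]
  note a1 = avg_lemma[OF P(1) r fm fb] and a2 = avg_lemma[OF P(2) r fm fb]
    and a3 = avg_lemma[OF P(3) r fm fb] and a4 = avg_lemma[OF P(4) r fm fb]
  let ?I = "\<lambda>m t. \<integral>\<xi>. indicator (ball t r) \<xi> *\<^sub>R f \<xi> \<partial>m"
  have eq: "(\<lambda>t. cm_integral \<mu> (\<lambda>\<xi>. indicator (ball t r) \<xi> *\<^sub>R f \<xi>)) =
      (\<lambda>t. (?I (cm_rp \<mu>) t - ?I (cm_rn \<mu>) t) + \<i> * (?I (cm_ip \<mu>) t - ?I (cm_in \<mu>) t))"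
    unfolding cm_integral_def ..
  show "integrable lborel (\<lambda>t. cm_integral \<mu> (\<lambda>\<xi>. indicator (ball t r) \<xi> *\<^sub>R f \<xi>))"
    unfolding eq using a1(2) a2(2) a3(2) a4(2) by auto
  show "(\<integral>t. cm_integral \<mu> (\<lambda>\<xi>. indicator (ball t r) \<xi> *\<^sub>R f \<xi>) \<partial>lborel) = measure lborel (ball (0::'a) r) *\<^sub>R cm_integral \<mu> f"
    unfolding eq cm_integral_def using a1(2,3) a2(2,3) a3(2,3) a4(2,3)
    by (simp add: scaleR_conv_of_real algebra_simps)
qed

theorem proposition4p11:
  fixes K :: "'a::euclidean_space set"
    and \<mu>s :: "nat \<Rightarrow> 'a cmeasure" and \<mu> :: "'a cmeasure"
  assumes "compact K" and "K \<noteq> {}" and "closure (interior K) = K"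
    and "\<And>n. Minf (\<mu>s n)" and "Minf \<mu>"
    and "(\<lambda>n. K_norm K (\<lambda>A. cm_val (\<mu>s n) A - cm_val \<mu> A)) \<longlonglongrightarrow> 0"
  shows "\<forall>\<phi>. schwartz \<phi> \<longrightarrow> (\<lambda>n. ft_pair (\<mu>s n) \<phi>) \<longlonglongrightarrow> ft_pair \<mu> \<phi>"
proof (intro allI impI)
  fix \<phi> :: "'a \<Rightarrow> complex" assume s\<phi>: "schwartz \<phi>"
  note Kc = assms(1) and Ms = assms(4) and M = assms(5) and lim = assms(6)
  have "interior K \<noteq> {}" using assms(2,3) by auto
  then obtain c0 where "c0 \<in> interior K" by blast
  then obtain r where r: "r > 0" "ball c0 r \<subseteq> K" by (meson mem_interior)
  define N where "N = DIM('a) + 2"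
  define f where "f = fourier \<phi>"
  have fm: "f \<in> borel_measurable borel" unfolding f_def by (rule fourier_meas[OF s\<phi>])
  obtain A where A: "\<forall>\<xi>. (1 + norm \<xi>) ^ N * norm (f \<xi>) \<le> A"
    unfolding f_def using fourier_decay[OF s\<phi>] by blast
  have A0: "A \<ge> 0" using A[rule_format, of 0] by (meson order_trans mult_nonneg_nonneg norm_ge_zero zero_le_power add_nonneg_nonneg zero_le_one)
  have fb: "norm (f \<xi>) \<le> A * wt (DIM('a)+2) \<xi>" for \<xi> using decay_wt[OF A] unfolding N_def .
  define lam where "lam = measure lborel (ball (0::'a) r)"
  have lam0: "lam > 0" unfolding lam_def by (rule ball_vol(3)[OF r(1)])
  define W where "W = (\<integral>t. wt N t \<partial>(lborel :: 'a measure))"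
  define C where "C = A * (1 + r) ^ N * W / lam"
  define Kn where "Kn n = K_norm K (\<lambda>A. cm_val (\<mu>s n) A - cm_val \<mu> A)" for n
  define \<Phi> where "\<Phi> \<nu> t = cm_integral \<nu> (\<lambda>\<xi>. indicator (ball t r) \<xi> *\<^sub>R f \<xi>)" for \<nu> t
  have bnd: "norm (ft_pair (\<mu>s n) \<phi> - ft_pair \<mu> \<phi>) \<le> C * enn2real (Kn n)" if fin: "Kn n < \<infinity>" for n
  proof -
    have int1: "integrable lborel (\<Phi> (\<mu>s n))" unfolding \<Phi>_def by (rule cm_avg(1)[OF Ms r(1) fm fb])
    have int2: "integrable lborel (\<Phi> \<mu>)" unfolding \<Phi>_def by (rule cm_avg(1)[OF M r(1) fm fb])
    have intw: "integrable lborel (\<lambda>t::'a. A * (1 + r) ^ N * enn2real (Kn n) * wt N t)"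
      unfolding N_def by (intro integrable_mult_right wt_integrable)
    have pt: "norm (\<Phi> (\<mu>s n) t - \<Phi> \<mu> t) \<le> A * (1 + r) ^ N * enn2real (Kn n) * wt N t" for t
    proof -
      define S where "S = (+) (t - c0) ` K"
      have Sc: "compact S" unfolding S_def using Kc by (rule compact_translation)
      have BS: "ball t r \<subseteq> S"
      proof
        fix \<xi> assume "\<xi> \<in> ball t r"
        then have "\<xi> - t + c0 \<in> ball c0 r" by (simp add: dist_norm norm_minus_commute algebra_simps)
        then have "\<xi> - t + c0 \<in> K" using r(2) by blast
        then show "\<xi> \<in> S" unfolding S_def by (intro image_eqI[of _ _ "\<xi> - t + c0"]) auto
      qed
      have TVle: "total_variation (\<lambda>A. cm_val (\<mu>s n) A - cm_val \<mu> A) S \<le> Kn n"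
        unfolding Kn_def K_norm_def S_def by (rule SUP_upper) simp
      have TVf: "total_variation (\<lambda>A. cm_val (\<mu>s n) A - cm_val \<mu> A) S < \<infinity>"
        using TVle fin by (rule le_less_trans)
      have fbb: "norm (f \<xi>) \<le> A * (1 + r) ^ N * wt N t" if "\<xi> \<in> ball t r" for \<xi>
      proof -
        have "norm (\<xi> - t) \<le> r" using that by (simp add: dist_norm norm_minus_commute)
        from wt_shift[OF this less_imp_le[OF r(1)]] have "wt N \<xi> \<le> (1 + r) ^ N * wt N t" .
        then have "A * wt N \<xi> \<le> A * ((1 + r) ^ N * wt N t)" using A0 by (rule mult_left_mono)
        then show ?thesis using fb[of \<xi>] unfolding N_def by (simp add: mult_ac)
      qed
      have c0': "A * (1 + r) ^ N * wt N t \<ge> 0" using A0 r(1) wt_pos[of N t] by simp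
      have "norm (\<Phi> (\<mu>s n) t - \<Phi> \<mu> t) \<le> A * (1 + r) ^ N * wt N t * enn2real (total_variation (\<lambda>A. cm_val (\<mu>s n) A - cm_val \<mu> A) S)"
        unfolding \<Phi>_def by (rule ball_ineq[OF Ms M Sc BS _ fm fbb c0' TVf]) simp
      also have "\<dots> \<le> A * (1 + r) ^ N * wt N t * enn2real (Kn n)"
        using c0' enn2real_mono[OF TVle] fin by (intro mult_left_mono) (auto simp: top_unique)
      finally show ?thesis by (simp add: mult_ac)
    qed
    have "lam *\<^sub>R (ft_pair (\<mu>s n) \<phi> - ft_pair \<mu> \<phi>) = (\<integral>t. \<Phi> (\<mu>s n) t - \<Phi> \<mu> t \<partial>lborel)"
      unfolding ft_pair_def f_def[symmetric] \<Phi>_def lam_def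
      using cm_avg(2)[OF Ms r(1) fm fb] cm_avg(2)[OF M r(1) fm fb] int1 int2 unfolding \<Phi>_def
      by (simp add: scaleR_diff_right)
    then have "lam * norm (ft_pair (\<mu>s n) \<phi> - ft_pair \<mu> \<phi>) = norm (\<integral>t. \<Phi> (\<mu>s n) t - \<Phi> \<mu> t \<partial>lborel)"
      using lam0 by (metis abs_of_pos norm_scaleR)
    also have "\<dots> \<le> (\<integral>t. A * (1 + r) ^ N * enn2real (Kn n) * wt N (t::'a) \<partial>lborel)"
      by (rule Bochner_Integration.integral_norm_bound_integral[OF Bochner_Integration.integrable_diff[OF int1 int2] intw pt])
    also have "\<dots> = A * (1 + r) ^ N * enn2real (Kn n) * W" unfolding W_def by simp
    finally have "lam * norm (ft_pair (\<mu>s n) \<phi> - ft_pair \<mu> \<phi>) \<le> A * (1 + r) ^ N * enn2real (Kn n) * W" .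
    then show ?thesis unfolding C_def using lam0 by (simp add: field_simps)
  qed
  have ev: "eventually (\<lambda>n. Kn n < \<infinity>) sequentially"
    using lim unfolding Kn_def[symmetric] by (rule order_tendstoD) simp
  have l0: "Kn \<longlonglongrightarrow> ennreal 0" using lim unfolding Kn_def[abs_def] by (simp only: ennreal_0)
  have "(\<lambda>n. enn2real (Kn n)) \<longlonglongrightarrow> 0" by (rule tendsto_enn2real[OF l0]) simp
  then have t0: "(\<lambda>n. C * enn2real (Kn n)) \<longlonglongrightarrow> 0" by (intro tendsto_mult_right_zero)
  have e0: "eventually (\<lambda>n. norm (ft_pair (\<mu>s n) \<phi> - ft_pair \<mu> \<phi>) \<le> C * enn2real (Kn n)) sequentially"
    using ev by eventually_elim (rule bnd)
  have "(\<lambda>n. ft_pair (\<mu>s n) \<phi> - ft_pair \<mu> \<phi>) \<longlonglongrightarrow> 0"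
    by (rule Lim_null_comparison[OF e0 t0])
  then show "(\<lambda>n. ft_pair (\<mu>s n) \<phi>) \<longlonglongrightarrow> ft_pair \<mu> \<phi>" by (rule LIM_zero_cancel)
qed

end
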